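(* For every finite graph $G$, $\mathrm{mcw}(G) \leq \mathrm{tw}(G)+2$.
   Context: The tree-width $\mathrm{tw}(G)$ is the minimum width (largest bag size minus one) of a tree decomposition of $G$ (a tree $T$ with bags $B_i\subseteq V$ covering all vertices and all edges, such that for each vertex the nodes whose bags contain it form a connected subtree). A multi-$k$-expression is built as follows, where each vertex carries a (possibly empty) set of labels from $\{1,\dots,k\}$: atoms $m\langle i_1,\dots,i_\ell\rangle$ (with $m$ a positive integer and $i_1<\dots<i_\ell\le k$, possibly $\ell=0$) create $m$ vertices, each with label set $\{i_1,\dots,i_\ell\}$; $\eta_{i,j}$ creates an edge between every vertex having label $i$ and every vertex having label $j$, allowed only when no vertex has both labels $i$ and $j$; $\rho_{i\to S}$ for $S\subseteq\{1,\dots,k\}$ replaces label $i$ by the set $S$ (a vertex with label set $S'\ni i$ gets $(S'\setminus\{i\})\cup S$); $\varepsilon_i$ deletes label $i$ from all vertices; $\oplus$ is disjoint union. The generated graph is obtained by deleting all labels. The multi-clique-width $\mathrm{mcw}(G)$ is the smallest $k$ such that $G$ is generated by a multi-$k$-expression. *)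

theory Defs
  imports Main
begin

definition graph :: "'a set \<Rightarrow> 'a set set \<Rightarrow> bool" where
  "graph V E \<longleftrightarrow> (\<forall>e\<in>E. \<exists>u v. e = {u, v} \<and> u \<noteq> v \<and> u \<in> V \<and> v \<in> V)"

definition finite_graph :: "'a set \<Rightarrow> 'a set set \<Rightarrow> bool" where
  "finite_graph V E \<longleftrightarrow> graph V E \<and> finite V"

fun walk :: "'b set set \<Rightarrow> 'b list \<Rightarrow> bool" where
  "walk TE [] = False"
| "walk TE [x] = True"
| "walk TE (x # y # xs) = ({x, y} \<in> TE \<and> walk TE (y # xs))"

definition connected_on :: "'b set \<Rightarrow> 'b set set \<Rightarrow> bool" where
  "connected_on N TE \<longleftrightarrow>
     (\<forall>x\<in>N. \<forall>y\<in>N. \<exists>p. walk TE p \<and> hd p = x \<and> last p = y \<and> set p \<subseteq> N)"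

definition has_cycle :: "'b set \<Rightarrow> 'b set set \<Rightarrow> bool" where
  "has_cycle N TE \<longleftrightarrow>
     (\<exists>p. length p \<ge> 3 \<and> distinct p \<and> set p \<subseteq> N \<and> walk TE p \<and> {last p, hd p} \<in> TE)"

definition is_tree :: "'b set \<Rightarrow> 'b set set \<Rightarrow> bool" where
  "is_tree N TE \<longleftrightarrow> finite N \<and> N \<noteq> {} \<and> graph N TE \<and> connected_on N TE \<and> \<not> has_cycle N TE"

text \<open>Tree nodes are taken to be natural numbers (every finite tree is isomorphic to one on nat).\<close>

definition tree_decomposition ::
  "'a set \<Rightarrow> 'a set set \<Rightarrow> nat set \<Rightarrow> nat set set \<Rightarrow> (nat \<Rightarrow> 'a set) \<Rightarrow> bool" where
  "tree_decomposition V E N TE B \<longleftrightarrow>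
     is_tree N TE \<and>
     (\<forall>i\<in>N. B i \<subseteq> V) \<and>
     (\<forall>v\<in>V. \<exists>i\<in>N. v \<in> B i) \<and>
     (\<forall>u v. {u, v} \<in> E \<longrightarrow> (\<exists>i\<in>N. u \<in> B i \<and> v \<in> B i)) \<and>
     (\<forall>v\<in>V. connected_on {i\<in>N. v \<in> B i} TE)"

definition decomposition_width :: "nat set \<Rightarrow> (nat \<Rightarrow> 'a set) \<Rightarrow> nat" where
  "decomposition_width N B = Max (card ` B ` N) - 1"

definition treewidth :: "'a set \<Rightarrow> 'a set set \<Rightarrow> nat" where
  "treewidth V E = (LEAST w. \<exists>N TE B. tree_decomposition V E N TE B \<and> decomposition_width N B = w)"

datatype mexpr =
    Atom nat "nat set"          (* m<S>: m vertices each with label set S *)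
  | Eta nat nat mexpr
  | Rho nat "nat set" mexpr
  | Eps nat mexpr
  | Union mexpr mexpr

type_synonym lgraph = "nat list set \<times> nat list set set \<times> (nat list \<Rightarrow> nat set)"

text \<open>Concrete evaluation: vertices are nat lists (position in the expression tree plus index).\<close>

fun eval :: "mexpr \<Rightarrow> lgraph" where
  "eval (Atom m S) = ({[i] | i. i < m}, {}, (\<lambda>_. S))"
| "eval (Eta i j e) = (case eval e of (V, E, L) \<Rightarrow>
      (V, E \<union> {{u, v} | u v. u \<in> V \<and> v \<in> V \<and> i \<in> L u \<and> j \<in> L v}, L))"
| "eval (Rho i S e) = (case eval e of (V, E, L) \<Rightarrow>
      (V, E, (\<lambda>v. if i \<in> L v then (L v - {i}) \<union> S else L v)))"
| "eval (Eps i e) = (case eval e of (V, E, L) \<Rightarrow> (V, E, (\<lambda>v. L v - {i})))"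
| "eval (Union e1 e2) = (case eval e1 of (V1, E1, L1) \<Rightarrow> case eval e2 of (V2, E2, L2) \<Rightarrow>
      ((\<lambda>v. 0 # v) ` V1 \<union> (\<lambda>v. 1 # v) ` V2,
       (\<lambda>e. (\<lambda>v. 0 # v) ` e) ` E1 \<union> (\<lambda>e. (\<lambda>v. 1 # v) ` e) ` E2,
       (\<lambda>v. case v of 0 # w \<Rightarrow> L1 w | _ # w \<Rightarrow> L2 w | [] \<Rightarrow> {})))"

fun mexpr_ok :: "nat \<Rightarrow> mexpr \<Rightarrow> bool" where
  "mexpr_ok k (Atom m S) = (m > 0 \<and> S \<subseteq> {1..k})"
| "mexpr_ok k (Eta i j e) = (mexpr_ok k e \<and> i \<in> {1..k} \<and> j \<in> {1..k} \<and>
      (case eval e of (V, E, L) \<Rightarrow> \<not> (\<exists>v\<in>V. i \<in> L v \<and> j \<in> L v)))"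
| "mexpr_ok k (Rho i S e) = (mexpr_ok k e \<and> i \<in> {1..k} \<and> S \<subseteq> {1..k})"
| "mexpr_ok k (Eps i e) = (mexpr_ok k e \<and> i \<in> {1..k})"
| "mexpr_ok k (Union e1 e2) = (mexpr_ok k e1 \<and> mexpr_ok k e2)"

definition generates :: "mexpr \<Rightarrow> 'a set \<Rightarrow> 'a set set \<Rightarrow> bool" where
  "generates e V E \<longleftrightarrow> (case eval e of (V', E', L) \<Rightarrow>
     (\<exists>f. bij_betw f V' V \<and> (\<forall>u\<in>V'. \<forall>v\<in>V'. {u, v} \<in> E' \<longleftrightarrow> {f u, f v} \<in> E)))"

definition mcw :: "'a set \<Rightarrow> 'a set set \<Rightarrow> nat" where
  "mcw V E = (LEAST k. \<exists>e. mexpr_ok k e \<and> generates e V E)"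

end

theory Submission
  imports Defs
begin


definition nbr :: "'a set set \<Rightarrow> 'a \<Rightarrow> 'a set" where
  "nbr E x = {y. {x, y} \<in> E}"

definition rep :: "'a set set \<Rightarrow> ('a \<Rightarrow> nat) \<Rightarrow> mexpr \<Rightarrow> 'a set \<Rightarrow> bool" where
  "rep E c e S \<longleftrightarrow> (case eval e of (V', E', L) \<Rightarrow>
     (\<exists>f. bij_betw f V' S \<and> (\<forall>u\<in>V'. \<forall>v\<in>V'. {u, v} \<in> E' \<longleftrightarrow> {f u, f v} \<in> E)
        \<and> (\<forall>u\<in>V'. L u = c ` (nbr E (f u) - S))))"

lemma cons_img_mem: "{x#a, x#b} \<in> image ((#) x) ` E1 \<longleftrightarrow> {a,b} \<in> E1"
proof -
  have i: "inj ((#) x)" by (rule injI) simp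
  have j: "inj (image ((#) x))" by (rule injI) (simp add: inj_image_eq_iff[OF i])
  have "{x#a, x#b} \<in> image ((#) x) ` E1 \<longleftrightarrow> image ((#) x) {a,b} \<in> image ((#) x) ` E1" by simp
  also have "\<dots> \<longleftrightarrow> {a,b} \<in> E1" by (rule inj_image_mem_iff[OF j])
  finally show ?thesis .
qed

lemma cons_img_nmem: "x \<noteq> y \<Longrightarrow> {x#a, z} \<notin> image ((#) y) ` E1"
proof
  assume "x \<noteq> y" "{x#a, z} \<in> image ((#) y) ` E1"
  then obtain e where "{x#a, z} = image ((#) y) e" by blast
  then have "x#a \<in> image ((#) y) e" by (metis insertI1)
  with \<open>x \<noteq> y\<close> show False by blast
qed

lemma cons_img_nmem2: "x \<noteq> y \<Longrightarrow> {z, x#a} \<notin> image ((#) y) ` E1"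
  using cons_img_nmem by (metis insert_commute)

lemma union_edges:
  fixes E1 E2 :: "nat list set set"
  defines "UE \<equiv> (\<lambda>e. (\<lambda>v. 0 # v) ` e) ` E1 \<union> (\<lambda>e. (\<lambda>v. 1 # v) ` e) ` E2"
  shows "{0#a, 0#b} \<in> UE \<longleftrightarrow> {a,b} \<in> E1"
    and "{1#a, 1#b} \<in> UE \<longleftrightarrow> {a,b} \<in> E2"
    and "{0#a, 1#b} \<notin> UE"
    and "{1#a, 0#b} \<notin> UE"
  unfolding UE_def using cons_img_mem[of 0 a b E1] cons_img_mem[of 1 a b E2]
    cons_img_nmem[of 0 1 a] cons_img_nmem[of 1 0 a] cons_img_nmem2[of 0 1 a] cons_img_nmem2[of 1 0 a]
    cons_img_nmem[of 0 1 a "1#b" E2] cons_img_nmem2[of 1 0 b "0#a" E1]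
  by auto

locale colgraph =
  fixes V :: "'a set" and E :: "'a set set" and c :: "'a \<Rightarrow> nat" and K :: nat
  assumes gr: "graph V E" and finV: "finite V" and col: "\<And>y. y \<in> V \<Longrightarrow> c y \<in> {1..K}"
begin

definition good :: "'a set \<Rightarrow> bool" where
  "good S \<longleftrightarrow> (\<exists>e. mexpr_ok (Suc K) e \<and> rep E c e S)"

definition buildable :: "'a set \<Rightarrow> bool" where
  "buildable S \<longleftrightarrow> S = {} \<or> good S"

lemma edge_in: "{x, y} \<in> E \<Longrightarrow> x \<in> V \<and> y \<in> V \<and> x \<noteq> y"
proof -
  assume "{x, y} \<in> E"
  then obtain u v where "{x, y} = {u, v}" "u \<noteq> v" "u \<in> V" "v \<in> V"
    using gr unfolding graph_def by blast
  then show ?thesis by (auto simp: doubleton_eq_iff)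
qed

lemma nbr_V: "nbr E x \<subseteq> V"
  unfolding nbr_def using edge_in by blast

lemma no_loop: "{x} \<notin> E"
  using edge_in[of x x] by (metis insert_absorb2)

lemma not_nbr_self: "x \<notin> nbr E x"
  using no_loop unfolding nbr_def by simp

lemma nbr_sym: "y \<in> nbr E x \<longleftrightarrow> x \<in> nbr E y"
  unfolding nbr_def by (simp add: insert_commute)

lemma col_nbr: "c ` nbr E x \<subseteq> {1..K}"
  using nbr_V col by blast

lemma good_single:
  assumes "x \<in> V" shows "good {x}"
proof -
  have "c ` nbr E x \<subseteq> {1..Suc K}" using col_nbr[of x] by auto
  then have ok: "mexpr_ok (Suc K) (Atom 1 (c ` nbr E x))" by simp
  have ev: "eval (Atom 1 (c ` nbr E x)) = ({[0]}, {}, \<lambda>_. c ` nbr E x)" by auto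
  have "rep E c (Atom 1 (c ` nbr E x)) {x}"
    unfolding rep_def ev
    apply simp
    apply (rule exI[where x="\<lambda>_. x"])
    using no_loop not_nbr_self by (auto simp: bij_betw_def)
  then show ?thesis using ok unfolding good_def by blast
qed


lemma rep_E:
  assumes "rep E c e S" "eval e = (V0, E0, L0)"
  obtains f where "bij_betw f V0 S" "\<And>u v. u \<in> V0 \<Longrightarrow> v \<in> V0 \<Longrightarrow> {u, v} \<in> E0 \<longleftrightarrow> {f u, f v} \<in> E"
    "\<And>u. u \<in> V0 \<Longrightarrow> L0 u = c ` (nbr E (f u) - S)"
  using assms unfolding rep_def by auto

lemma rep_I:
  assumes "eval e = (V0, E0, L0)" "bij_betw f V0 S" "\<And>u v. u \<in> V0 \<Longrightarrow> v \<in> V0 \<Longrightarrow> {u, v} \<in> E0 \<longleftrightarrow> {f u, f v} \<in> E"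
    "\<And>u. u \<in> V0 \<Longrightarrow> L0 u = c ` (nbr E (f u) - S)"
  shows "rep E c e S"
  using assms unfolding rep_def by auto

lemma good_union:
  assumes g1: "good S1" and g2: "good S2" and dis: "S1 \<inter> S2 = {}"
    and ne: "\<And>u w. u \<in> S1 \<Longrightarrow> w \<in> S2 \<Longrightarrow> {u, w} \<notin> E"
  shows "good (S1 \<union> S2)"
proof -
  obtain e1 where ok1: "mexpr_ok (Suc K) e1" and r1: "rep E c e1 S1" using g1 unfolding good_def by blast
  obtain e2 where ok2: "mexpr_ok (Suc K) e2" and r2: "rep E c e2 S2" using g2 unfolding good_def by blast
  obtain V1 E1 L1 where ev1: "eval e1 = (V1, E1, L1)" by (cases "eval e1")
  obtain V2 E2 L2 where ev2: "eval e2 = (V2, E2, L2)" by (cases "eval e2")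
  obtain f1 where b1: "bij_betw f1 V1 S1" and e1: "\<And>u v. u \<in> V1 \<Longrightarrow> v \<in> V1 \<Longrightarrow> {u, v} \<in> E1 \<longleftrightarrow> {f1 u, f1 v} \<in> E"
    and l1: "\<And>u. u \<in> V1 \<Longrightarrow> L1 u = c ` (nbr E (f1 u) - S1)" using rep_E[OF r1 ev1] by blast
  obtain f2 where b2: "bij_betw f2 V2 S2" and e2: "\<And>u v. u \<in> V2 \<Longrightarrow> v \<in> V2 \<Longrightarrow> {u, v} \<in> E2 \<longleftrightarrow> {f2 u, f2 v} \<in> E"
    and l2: "\<And>u. u \<in> V2 \<Longrightarrow> L2 u = c ` (nbr E (f2 u) - S2)" using rep_E[OF r2 ev2] by blast
  define V' where "V' = (\<lambda>v. 0 # v) ` V1 \<union> (\<lambda>v. 1 # v) ` V2"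
  define E' where "E' = (\<lambda>e. (\<lambda>v. 0 # v) ` e) ` E1 \<union> (\<lambda>e. (\<lambda>v. 1 # v) ` e) ` E2"
  define L' where "L' = (\<lambda>v::nat list. case v of 0 # w \<Rightarrow> L1 w | _ # w \<Rightarrow> L2 w | [] \<Rightarrow> {})"
  define f where "f = (\<lambda>v::nat list. case v of 0 # w \<Rightarrow> f1 w | _ # w \<Rightarrow> f2 w | [] \<Rightarrow> undefined)"
  have ev: "eval (Union e1 e2) = (V', E', L')" unfolding V'_def E'_def L'_def by (simp add: ev1 ev2)
  have V'cases: "P" if "p \<in> V'" "\<And>a. a \<in> V1 \<Longrightarrow> p = 0 # a \<Longrightarrow> P" "\<And>a. a \<in> V2 \<Longrightarrow> p = 1 # a \<Longrightarrow> P" for p P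
    using that unfolding V'_def by blast
  have f0[simp]: "f (0 # a) = f1 a" for a unfolding f_def by simp
  have f1'[simp]: "f (Suc n # a) = f2 a" for a n unfolding f_def by simp
  have L0[simp]: "L' (0 # a) = L1 a" for a unfolding L'_def by simp
  have L1'[simp]: "L' (Suc n # a) = L2 a" for a n unfolding L'_def by simp
  have fS1: "f1 a \<in> S1" if "a \<in> V1" for a using b1 that bij_betwE by blast
  have fS2: "f2 a \<in> S2" if "a \<in> V2" for a using b2 that bij_betwE by blast
  have inj1: "inj_on f1 V1" using b1 bij_betw_imp_inj_on by blast
  have inj2: "inj_on f2 V2" using b2 bij_betw_imp_inj_on by blast
  have bij: "bij_betw f V' (S1 \<union> S2)"
    unfolding bij_betw_def
  proof
    show "inj_on f V'"
    proof (rule inj_onI)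
      fix p q assume p: "p \<in> V'" and q: "q \<in> V'" and eq: "f p = f q"
      show "p = q"
        apply (rule V'cases[OF p]; rule V'cases[OF q])
        using eq fS1 fS2 dis inj1 inj2 by (auto dest: inj_onD; metis disjoint_iff)+
    qed
    have "f ` V' = f1 ` V1 \<union> f2 ` V2" unfolding V'_def image_Un image_image by simp
    also have "\<dots> = S1 \<union> S2" using b1 b2 bij_betw_imp_surj_on by metis
    finally show "f ` V' = S1 \<union> S2" .
  qed
  have edges: "{p, q} \<in> E' \<longleftrightarrow> {f p, f q} \<in> E" if p: "p \<in> V'" and q: "q \<in> V'" for p q
    apply (rule V'cases[OF p]; rule V'cases[OF q])
    unfolding E'_def using union_edges e1 e2 fS1 fS2 ne
    by (auto simp: insert_commute)
  have labels: "L' p = c ` (nbr E (f p) - (S1 \<union> S2))" if p: "p \<in> V'" for p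
  proof (rule V'cases[OF p])
    fix a assume a: "a \<in> V1" "p = 0 # a"
    have "nbr E (f1 a) \<inter> S2 = {}" using ne fS1[OF a(1)] unfolding nbr_def by blast
    then have "nbr E (f1 a) - (S1 \<union> S2) = nbr E (f1 a) - S1" by blast
    then show ?thesis using a l1 by simp
  next
    fix a assume a: "a \<in> V2" "p = 1 # a"
    have "nbr E (f2 a) \<inter> S1 = {}"
    proof (rule ccontr)
      assume "nbr E (f2 a) \<inter> S1 \<noteq> {}"
      then obtain y where "y \<in> S1" "{f2 a, y} \<in> E" unfolding nbr_def by blast
      then show False using ne[of y "f2 a"] fS2[OF a(1)] by (simp add: insert_commute)
    qed
    then have "nbr E (f2 a) - (S1 \<union> S2) = nbr E (f2 a) - S2" by blast
    then show ?thesis using a l2 by simp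
  qed
  have "rep E c (Union e1 e2) (S1 \<union> S2)"
    by (rule rep_I[OF ev bij edges labels])
  moreover have "mexpr_ok (Suc K) (Union e1 e2)" using ok1 ok2 by simp
  ultimately show ?thesis unfolding good_def by blast
qed


lemma good_add:
  assumes g: "good S" and xV: "x \<in> V" and xS: "x \<notin> S"
    and cond: "\<And>u y. u \<in> S \<Longrightarrow> y \<in> nbr E u - S \<Longrightarrow> y \<noteq> x \<Longrightarrow> c y \<noteq> c x"
  shows "good (insert x S)"
proof -
  obtain e where ok: "mexpr_ok (Suc K) e" and r: "rep E c e S" using g unfolding good_def by blast
  obtain V0 E0 L0 where ev0: "eval e = (V0, E0, L0)" by (cases "eval e")
  obtain f where b: "bij_betw f V0 S" and ee: "\<And>u v. u \<in> V0 \<Longrightarrow> v \<in> V0 \<Longrightarrow> {u, v} \<in> E0 \<longleftrightarrow> {f u, f v} \<in> E"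
    and ll: "\<And>u. u \<in> V0 \<Longrightarrow> L0 u = c ` (nbr E (f u) - S)" using rep_E[OF r ev0] by blast
  define Sn where "Sn = c ` (nbr E x - insert x S)"
  define e' where "e' = Rho (Suc K) Sn (Eps (c x) (Eta (Suc K) (c x) (Union (Atom 1 {Suc K}) e)))"
  define Vu where "Vu = (\<lambda>v. 0 # v) ` {[i] |i. i < (1::nat)} \<union> (\<lambda>v. 1 # v) ` V0"
  define Eu where "Eu = (\<lambda>e. (\<lambda>v. 0 # v) ` e) ` ({}::nat list set set) \<union> (\<lambda>e. (\<lambda>v. 1 # v) ` e) ` E0"
  define Lu where "Lu = (\<lambda>v::nat list. case v of 0 # w \<Rightarrow> {Suc K} | _ # w \<Rightarrow> L0 w | [] \<Rightarrow> {})"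
  define E2 where "E2 = Eu \<union> {{u, v} |u v. u \<in> Vu \<and> v \<in> Vu \<and> Suc K \<in> Lu u \<and> c x \<in> Lu v}"
  define L3 where "L3 = (\<lambda>v. Lu v - {c x})"
  define L4 where "L4 = (\<lambda>v. if Suc K \<in> L3 v then (L3 v - {Suc K}) \<union> Sn else L3 v)"
  have evu: "eval (Union (Atom 1 {Suc K}) e) = (Vu, Eu, Lu)"
    unfolding Vu_def Eu_def Lu_def by (simp add: ev0)
  have ev1: "eval (Eta (Suc K) (c x) (Union (Atom 1 {Suc K}) e)) = (Vu, E2, Lu)"
    unfolding eval.simps(2) evu E2_def by simp
  have ev2: "eval (Eps (c x) (Eta (Suc K) (c x) (Union (Atom 1 {Suc K}) e))) = (Vu, E2, L3)"
    unfolding eval.simps(4) ev1 L3_def by simp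
  have ev: "eval e' = (Vu, E2, L4)"
    unfolding e'_def eval.simps(3) ev2 L4_def by simp
  have one: "{[i] |i. i < (1::nat)} = {[0]}" by auto
  have Vu_eq: "Vu = insert [0,0] ((\<lambda>v. 1 # v) ` V0)" unfolding Vu_def one by simp
  have Vcases: "P" if "p \<in> Vu" "p = [0,0] \<Longrightarrow> P" "\<And>a. a \<in> V0 \<Longrightarrow> p = 1 # a \<Longrightarrow> P" for p P
    using that unfolding Vu_eq by blast
  have Lu0[simp]: "Lu [0,0] = {Suc K}" unfolding Lu_def by simp
  have Lu1[simp]: "Lu (Suc n # a) = L0 a" for a n unfolding Lu_def by simp
  have fS: "f a \<in> S" if "a \<in> V0" for a using b that bij_betwE by blast
  have cx: "c x \<in> {1..K}" using col xV by blast
  have L0K: "Suc K \<notin> L0 a" if "a \<in> V0" for a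
  proof -
    have "L0 a \<subseteq> c ` nbr E (f a)" unfolding ll[OF that] by (rule image_mono) blast
    then have "L0 a \<subseteq> {1..K}" using col_nbr[of "f a"] by (rule subset_trans)
    then show ?thesis by (metis atLeastAtMost_iff subsetD Suc_n_not_le_n)
  qed
  have L0x: "c x \<in> L0 a \<longleftrightarrow> x \<in> nbr E (f a)" if a: "a \<in> V0" for a
  proof
    assume "c x \<in> L0 a"
    then have "c x \<in> c ` (nbr E (f a) - S)" unfolding ll[OF a] .
    then obtain y where y: "y \<in> nbr E (f a) - S" "c x = c y" by (rule imageE)
    have "y = x"
    proof (rule ccontr)
      assume "y \<noteq> x"
      then have "c y \<noteq> c x" by (rule cond[OF fS[OF a] y(1)])
      then show False using y(2) by simp
    qed
    then show "x \<in> nbr E (f a)" using y(1) by simp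
  next
    assume "x \<in> nbr E (f a)"
    then have "x \<in> nbr E (f a) - S" using xS by simp
    then show "c x \<in> L0 a" unfolding ll[OF a] by (rule imageI)
  qed
  have nob: "\<not> (\<exists>v\<in>Vu. Suc K \<in> Lu v \<and> c x \<in> Lu v)"
  proof
    assume "\<exists>v\<in>Vu. Suc K \<in> Lu v \<and> c x \<in> Lu v"
    then obtain v where v: "v \<in> Vu" "Suc K \<in> Lu v" "c x \<in> Lu v" by blast
    show False by (rule Vcases[OF v(1)]) (use v L0K cx in auto)
  qed
  have ok1: "mexpr_ok (Suc K) (Union (Atom 1 {Suc K}) e)" using ok by simp
  have ok2: "mexpr_ok (Suc K) (Eta (Suc K) (c x) (Union (Atom 1 {Suc K}) e))"
    unfolding mexpr_ok.simps(2) evu using ok1 cx nob by simp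
  have ok3: "mexpr_ok (Suc K) (Eps (c x) (Eta (Suc K) (c x) (Union (Atom 1 {Suc K}) e)))"
    using ok2 cx by simp
  have "Sn \<subseteq> c ` nbr E x" unfolding Sn_def by (rule image_mono) blast
  then have "Sn \<subseteq> {1..K}" using col_nbr[of x] by (rule subset_trans)
  then have "Sn \<subseteq> {1..Suc K}" by auto
  then have okE: "mexpr_ok (Suc K) e'" unfolding e'_def using ok3 by simp
  define f' where "f' = (\<lambda>v::nat list. case v of 0 # w \<Rightarrow> x | _ # w \<Rightarrow> f w | [] \<Rightarrow> undefined)"
  have f'0[simp]: "f' [0,0] = x" unfolding f'_def by simp
  have f'1[simp]: "f' (Suc n # a) = f a" for a n unfolding f'_def by simp
  have inj: "inj_on f V0" using b bij_betw_imp_inj_on by blast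
  have bij: "bij_betw f' Vu (insert x S)"
    unfolding bij_betw_def
  proof
    show "inj_on f' Vu"
    proof (rule inj_onI)
      fix p q assume p: "p \<in> Vu" and q: "q \<in> Vu" and eq: "f' p = f' q"
      show "p = q"
        apply (rule Vcases[OF p]; rule Vcases[OF q])
        using eq fS xS inj by (auto dest: inj_onD)
    qed
    have "f' ` Vu = insert x (f ` V0)" unfolding Vu_eq image_insert image_image by simp
    also have "\<dots> = insert x S" using b bij_betw_imp_surj_on by metis
    finally show "f' ` Vu = insert x S" .
  qed
  have E2mem: "{p, q} \<in> E2 \<longleftrightarrow> {p, q} \<in> Eu \<or> (\<exists>u v. {p, q} = {u, v} \<and> u \<in> Vu \<and> v \<in> Vu \<and> Suc K \<in> Lu u \<and> c x \<in> Lu v)" for p q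
    unfolding E2_def by blast
  have Eu_mem: "{Suc 0 # a, Suc 0 # b'} \<in> Eu \<longleftrightarrow> {a, b'} \<in> E0" for a b'
    unfolding Eu_def using cons_img_mem[of 1 a b' E0] by simp
  have Eu_n1: "{[0,0], q} \<notin> Eu" for q
    unfolding Eu_def using cons_img_nmem[of 0 1 "[0]" q E0] by simp
  have Eu_n2: "{q, [0,0]} \<notin> Eu" for q
    unfolding Eu_def using cons_img_nmem2[of 0 1 q "[0]" E0] by simp
  have SK: "Suc K \<in> Lu u \<longleftrightarrow> u = [0,0]" if "u \<in> Vu" for u
    by (rule Vcases[OF that]) (use L0K in auto)
  have edges: "{p, q} \<in> E2 \<longleftrightarrow> {f' p, f' q} \<in> E" if p: "p \<in> Vu" and q: "q \<in> Vu" for p q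
  proof (rule Vcases[OF p]; rule Vcases[OF q])
    assume pq: "p = [0,0]" "q = [0,0]"
    have n1: "{p, q} \<notin> Eu" using Eu_n1[of "[0,0]"] pq by simp
    have n2: "\<not> (\<exists>u v. {p, q} = {u, v} \<and> u \<in> Vu \<and> v \<in> Vu \<and> Suc K \<in> Lu u \<and> c x \<in> Lu v)"
    proof
      assume "\<exists>u v. {p, q} = {u, v} \<and> u \<in> Vu \<and> v \<in> Vu \<and> Suc K \<in> Lu u \<and> c x \<in> Lu v"
      then obtain u v where uv: "{p, q} = {u, v}" "c x \<in> Lu v" by blast
      then have "v = [0,0]" using pq by (auto simp: doubleton_eq_iff)
      then show False using uv cx by simp
    qed
    have "{f' p, f' q} \<notin> E" using pq no_loop[of x] by simp
    then show ?thesis using E2mem[of p q] n1 n2 by blast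
  next
    fix b' assume pq: "p = [0,0]" "b' \<in> V0" "q = 1 # b'"
    have "{p, q} \<in> E2 \<longleftrightarrow> c x \<in> L0 b'"
    proof -
      have "{p, q} \<in> E2 \<longleftrightarrow> (\<exists>u v. {p, q} = {u, v} \<and> u \<in> Vu \<and> v \<in> Vu \<and> Suc K \<in> Lu u \<and> c x \<in> Lu v)"
        using E2mem[of p q] Eu_n1 pq by blast
      also have "\<dots> \<longleftrightarrow> c x \<in> Lu q"
      proof
        assume "\<exists>u v. {p, q} = {u, v} \<and> u \<in> Vu \<and> v \<in> Vu \<and> Suc K \<in> Lu u \<and> c x \<in> Lu v"
        then obtain u v where uv: "{p,q} = {u,v}" "u \<in> Vu" "Suc K \<in> Lu u" "c x \<in> Lu v" by blast
        have "u = [0,0]" using SK uv(2,3) by blast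
        then have "v = q" using uv(1) pq by (auto simp: doubleton_eq_iff)
        then show "c x \<in> Lu q" using uv(4) by simp
      next
        assume "c x \<in> Lu q"
        then show "\<exists>u v. {p, q} = {u, v} \<and> u \<in> Vu \<and> v \<in> Vu \<and> Suc K \<in> Lu u \<and> c x \<in> Lu v"
          using p q pq SK by (intro exI[of _ p] exI[of _ q]) auto
      qed
      finally show ?thesis using pq by simp
    qed
    also have "\<dots> \<longleftrightarrow> {f' p, f' q} \<in> E" using L0x[OF pq(2)] pq unfolding nbr_def by (simp add: insert_commute)
    finally show ?thesis .
  next
    fix a assume pq: "a \<in> V0" "p = 1 # a" "q = [0,0]"
    have "{p, q} \<in> E2 \<longleftrightarrow> c x \<in> L0 a"
    proof -
      have "{p, q} \<in> E2 \<longleftrightarrow> (\<exists>u v. {p, q} = {u, v} \<and> u \<in> Vu \<and> v \<in> Vu \<and> Suc K \<in> Lu u \<and> c x \<in> Lu v)"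
        using E2mem[of p q] Eu_n2 pq by blast
      also have "\<dots> \<longleftrightarrow> c x \<in> Lu p"
      proof
        assume "\<exists>u v. {p, q} = {u, v} \<and> u \<in> Vu \<and> v \<in> Vu \<and> Suc K \<in> Lu u \<and> c x \<in> Lu v"
        then obtain u v where uv: "{p,q} = {u,v}" "u \<in> Vu" "Suc K \<in> Lu u" "c x \<in> Lu v" by blast
        have "u = [0,0]" using SK uv(2,3) by blast
        then have "v = p" using uv(1) pq by (auto simp: doubleton_eq_iff)
        then show "c x \<in> Lu p" using uv(4) by simp
      next
        assume "c x \<in> Lu p"
        then show "\<exists>u v. {p, q} = {u, v} \<and> u \<in> Vu \<and> v \<in> Vu \<and> Suc K \<in> Lu u \<and> c x \<in> Lu v"
          using p q pq SK by (intro exI[of _ q] exI[of _ p]) (auto simp: insert_commute)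
      qed
      finally show ?thesis using pq by simp
    qed
    also have "\<dots> \<longleftrightarrow> {f' p, f' q} \<in> E" using L0x[OF pq(1)] pq unfolding nbr_def by simp
    finally show ?thesis .
  next
    fix a b' assume pq: "a \<in> V0" "p = 1 # a" "b' \<in> V0" "q = 1 # b'"
    have "\<not> (\<exists>u v. {p, q} = {u, v} \<and> u \<in> Vu \<and> v \<in> Vu \<and> Suc K \<in> Lu u \<and> c x \<in> Lu v)"
      using SK pq by (auto simp: doubleton_eq_iff)
    note nn = this
    have "{p, q} \<in> E2 \<longleftrightarrow> {p, q} \<in> Eu"
      unfolding E2mem[of p q] by (simp only: nn simp_thms)
    also have "\<dots> \<longleftrightarrow> {a, b'} \<in> E0" using Eu_mem pq by simp
    also have "\<dots> \<longleftrightarrow> {f' p, f' q} \<in> E" using ee pq by simp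
    finally show ?thesis .
  qed
  have labels: "L4 p = c ` (nbr E (f' p) - insert x S)" if p: "p \<in> Vu" for p
  proof (rule Vcases[OF p])
    assume "p = [0,0]"
    then show ?thesis unfolding L4_def L3_def Sn_def using cx by auto
  next
    fix a assume a: "a \<in> V0" "p = 1 # a"
    have "L4 p = L0 a - {c x}" unfolding L4_def L3_def using a L0K by simp
    also have "\<dots> = c ` (nbr E (f a) - S) - {c x}" using ll a by simp
    also have "\<dots> = c ` (nbr E (f a) - insert x S)"
    proof (rule set_eqI)
      fix z
      show "z \<in> c ` (nbr E (f a) - S) - {c x} \<longleftrightarrow> z \<in> c ` (nbr E (f a) - insert x S)"
      proof
        assume "z \<in> c ` (nbr E (f a) - S) - {c x}"
        then obtain y where y: "y \<in> nbr E (f a) - S" "z = c y" "c y \<noteq> c x" by auto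
        then have "y \<noteq> x" by auto
        then show "z \<in> c ` (nbr E (f a) - insert x S)" using y by auto
      next
        assume "z \<in> c ` (nbr E (f a) - insert x S)"
        then obtain y where y: "y \<in> nbr E (f a) - insert x S" "z = c y" by auto
        then have "c y \<noteq> c x" using cond[OF fS[OF a(1)], of y] by auto
        then show "z \<in> c ` (nbr E (f a) - S) - {c x}" using y by auto
      qed
    qed
    finally show ?thesis using a by simp
  qed
  have "rep E c e' (insert x S)" by (rule rep_I[OF ev bij edges labels])
  then show ?thesis using okE unfolding good_def by blast
qed

end


lemma walk_nonempty: "walk TE p \<Longrightarrow> p \<noteq> []"
  by (cases p) auto

lemma walk_Cons: "walk TE (x # p) \<longleftrightarrow> (p = [] \<or> ({x, hd p} \<in> TE \<and> walk TE p))"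
  by (cases p) auto

lemma walk_append_iff:
  "p \<noteq> [] \<Longrightarrow> q \<noteq> [] \<Longrightarrow> walk TE (p @ q) \<longleftrightarrow> walk TE p \<and> walk TE q \<and> {last p, hd q} \<in> TE"
proof (induction p)
  case Nil then show ?case by simp
next
  case (Cons x p)
  show ?case
  proof (cases "p = []")
    case True
    then show ?thesis using Cons.prems walk_Cons[of TE x q] by auto
  next
    case False
    have "walk TE ((x # p) @ q) \<longleftrightarrow> {x, hd p} \<in> TE \<and> walk TE (p @ q)"
      using False walk_Cons[of TE x "p @ q"] by simp
    also have "\<dots> \<longleftrightarrow> {x, hd p} \<in> TE \<and> walk TE p \<and> walk TE q \<and> {last p, hd q} \<in> TE"
      using Cons.IH[OF False Cons.prems(2)] by simp
    also have "\<dots> \<longleftrightarrow> walk TE (x # p) \<and> walk TE q \<and> {last (x # p), hd q} \<in> TE"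
      using False walk_Cons[of TE x p] by auto
    finally show ?thesis .
  qed
qed

lemma walk_join:
  assumes "walk TE p" "walk TE q" "last p = hd q"
  shows "walk TE (p @ tl q)" "hd (p @ tl q) = hd p" "last (p @ tl q) = last q"
    "set (p @ tl q) \<subseteq> set p \<union> set q"
proof -
  have p: "p \<noteq> []" and q: "q \<noteq> []" using assms walk_nonempty by auto
  obtain y q' where qq: "q = y # q'" using q by (cases q) auto
  show "walk TE (p @ tl q)"
  proof (cases "q' = []")
    case True then show ?thesis using qq assms by simp
  next
    case False
    have "walk TE q'" "{y, hd q'} \<in> TE" using assms(2) qq False walk_Cons[of TE y q'] by auto
    then show ?thesis using walk_append_iff[OF p False] assms qq by simp
  qed
  show "hd (p @ tl q) = hd p" using p by simp
  show "last (p @ tl q) = last q" using assms(3) qq by (cases "q' = []") auto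
  show "set (p @ tl q) \<subseteq> set p \<union> set q" using qq by auto
qed

lemma walk_rev: "walk TE p \<Longrightarrow> walk TE (rev p)"
proof (induction TE p rule: walk.induct)
  case (1 TE) then show ?case by simp
next
  case (2 TE x) then show ?case by simp
next
  case (3 TE x y xs)
  have w: "walk TE (rev (y # xs))" using 3 by simp
  have "walk TE (rev (y # xs) @ [x])"
    using walk_append_iff[of "rev (y # xs)" "[x]" TE] w 3(2) by (simp add: insert_commute)
  then show ?case by simp
qed

lemma walk_mono: "walk TE p \<Longrightarrow> TE \<subseteq> TE' \<Longrightarrow> walk TE' p"
  by (induction TE p rule: walk.induct) auto

lemma walk_restrict: "walk TE p \<Longrightarrow> set p \<subseteq> A \<Longrightarrow> walk {e \<in> TE. e \<subseteq> A} p"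
  by (induction TE p rule: walk.induct) auto

lemma walk_shortcut:
  assumes "walk TE (xs @ [y] @ ys @ [y] @ zs)"
  shows "walk TE (xs @ [y] @ zs)"
proof -
  have w1: "walk TE (xs @ [y])"
  proof -
    have "walk TE ((xs @ [y]) @ (ys @ [y] @ zs))" using assms by simp
    then show ?thesis using walk_append_iff[of "xs @ [y]" "ys @ [y] @ zs" TE] by simp
  qed
  have w2: "walk TE ([y] @ zs)"
  proof -
    have "walk TE ((xs @ [y] @ ys) @ ([y] @ zs))" using assms by simp
    then show ?thesis using walk_append_iff[of "xs @ [y] @ ys" "[y] @ zs" TE] by simp
  qed
  have "walk TE ((xs @ [y]) @ tl ([y] @ zs))" by (rule walk_join(1)[OF w1 w2]) simp
  then show ?thesis by simp
qed

lemma walk_to_path: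
  "walk TE p \<Longrightarrow> \<exists>q. walk TE q \<and> distinct q \<and> hd q = hd p \<and> last q = last p \<and> set q \<subseteq> set p"
proof (induction "length p" arbitrary: p rule: less_induct)
  case less
  show ?case
  proof (cases "distinct p")
    case True then show ?thesis using less.prems by blast
  next
    case False
    then obtain xs y ys zs where pp: "p = xs @ [y] @ ys @ [y] @ zs" using not_distinct_decomp by blast
    define p' where "p' = xs @ [y] @ zs"
    have w: "walk TE p'" unfolding p'_def using walk_shortcut[of TE xs y ys zs] less.prems pp by simp
    have len: "length p' < length p" unfolding p'_def pp by simp
    obtain q where q: "walk TE q" "distinct q" "hd q = hd p'" "last q = last p'" "set q \<subseteq> set p'"
      using less.hyps[OF len w] by blast
    have h1: "hd p' = hd p" unfolding p'_def pp by (cases xs) auto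
    have h2: "last p' = last p" unfolding p'_def pp by (cases zs) auto
    have h3: "set p' \<subseteq> set p" unfolding p'_def pp by auto
    show ?thesis using q h1 h2 h3 by (intro exI[of _ q]) auto
  qed
qed

lemma cross:
  assumes cr: "\<forall>u v. {u, v} \<in> TE \<longrightarrow> u \<in> A \<longrightarrow> v \<notin> A \<longrightarrow> u = a0"
  shows "walk TE p \<Longrightarrow> hd p \<in> A \<Longrightarrow> \<not> set p \<subseteq> A \<Longrightarrow>
    \<exists>q. walk TE q \<and> hd q = hd p \<and> last q = a0 \<and> set q \<subseteq> set p \<inter> A"
proof (induction p)
  case Nil then show ?case by simp
next
  case (Cons x p)
  have xA: "x \<in> A" using Cons.prems by simp
  have pne: "p \<noteq> []" using Cons.prems xA by auto
  have e: "{x, hd p} \<in> TE" and wp: "walk TE p" using Cons.prems(1) pne walk_Cons[of TE x p] by auto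
  show ?case
  proof (cases "hd p \<in> A")
    case False
    then have "x = a0" using cr e xA by blast
    then show ?thesis using xA by (intro exI[of _ "[x]"]) auto
  next
    case True
    have "\<not> set p \<subseteq> A" using Cons.prems xA by auto
    then obtain q where q: "walk TE q" "hd q = hd p" "last q = a0" "set q \<subseteq> set p \<inter> A"
      using Cons.IH[OF wp True] by blast
    have qne: "q \<noteq> []" using q walk_nonempty by blast
    have "walk TE (x # q)" using q(1,2) e qne walk_Cons[of TE x q] by simp
    then show ?thesis using q xA qne by (intro exI[of _ "x # q"]) auto
  qed
qed

definition cut :: "nat set set \<Rightarrow> nat set \<Rightarrow> nat \<Rightarrow> nat \<Rightarrow> bool" where
  "cut TE A a0 b0 \<longleftrightarrow> a0 \<in> A \<and> b0 \<notin> A \<and> {a0, b0} \<in> TE \<and>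
     (\<forall>x y. {x, y} \<in> TE \<longrightarrow> x \<in> A \<longrightarrow> y \<notin> A \<longrightarrow> x = a0 \<and> y = b0)"

lemma cut_sym: "cut TE A a0 b0 \<Longrightarrow> cut TE (- A) b0 a0"
proof -
  assume ct: "cut TE A a0 b0"
  have c: "\<And>x y. {x, y} \<in> TE \<Longrightarrow> x \<in> A \<Longrightarrow> y \<notin> A \<Longrightarrow> x = a0 \<and> y = b0" using ct unfolding cut_def by blast
  have "\<And>x y. {x, y} \<in> TE \<Longrightarrow> x \<in> - A \<Longrightarrow> y \<notin> - A \<Longrightarrow> x = b0 \<and> y = a0"
  proof -
    fix x y assume "{x, y} \<in> TE" "x \<in> - A" "y \<notin> - A"
    then have "{y, x} \<in> TE" "y \<in> A" "x \<notin> A" by (auto simp: insert_commute)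
    then show "x = b0 \<and> y = a0" using c by blast
  qed
  then show ?thesis using ct unfolding cut_def by (auto simp: insert_commute)
qed

lemma cut_cross: "cut TE A a0 b0 \<Longrightarrow> {x, y} \<in> TE \<Longrightarrow> x \<in> A \<Longrightarrow> y \<notin> A \<Longrightarrow> x = a0"
  unfolding cut_def by blast

lemma tree_edge: "is_tree N TE \<Longrightarrow> {x, y} \<in> TE \<Longrightarrow> x \<in> N \<and> y \<in> N \<and> x \<noteq> y"
proof -
  assume t: "is_tree N TE" and e: "{x, y} \<in> TE"
  then obtain u v where "{x, y} = {u, v}" "u \<noteq> v" "u \<in> N" "v \<in> N"
    unfolding is_tree_def graph_def by blast
  then show ?thesis by (auto simp: doubleton_eq_iff)
qed

lemma conn_walk:
  "connected_on M TE \<Longrightarrow> x \<in> M \<Longrightarrow> y \<in> M \<Longrightarrow> \<exists>p. walk TE p \<and> hd p = x \<and> last p = y \<and> set p \<subseteq> M"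
  unfolding connected_on_def by blast

lemma conn_part:
  assumes c: "connected_on M TE" and ct: "cut TE A a0 b0" and MN: "M \<subseteq> N"
  shows "connected_on (M \<inter> A) {e \<in> TE. e \<subseteq> N \<inter> A}"
  unfolding connected_on_def
proof (intro ballI)
  fix x y assume x: "x \<in> M \<inter> A" and y: "y \<in> M \<inter> A"
  obtain p where p: "walk TE p" "hd p = x" "last p = y" "set p \<subseteq> M" using conn_walk[OF c] x y by blast
  show "\<exists>p. walk {e \<in> TE. e \<subseteq> N \<inter> A} p \<and> hd p = x \<and> last p = y \<and> set p \<subseteq> M \<inter> A"
  proof (cases "set p \<subseteq> A")
    case True
    then show ?thesis using p MN walk_restrict[OF p(1), of "N \<inter> A"] by (intro exI[of _ p]) auto
  next
    case False
    have cr: "\<forall>u v. {u, v} \<in> TE \<longrightarrow> u \<in> A \<longrightarrow> v \<notin> A \<longrightarrow> u = a0" using cut_cross[OF ct] by blast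
    have pne: "p \<noteq> []" using p walk_nonempty by blast
    obtain q1 where q1: "walk TE q1" "hd q1 = x" "last q1 = a0" "set q1 \<subseteq> set p \<inter> A"
      using cross[of TE A a0, OF cr p(1)] p(2) x False by auto
    have wr: "walk TE (rev p)" using walk_rev[OF p(1)] .
    have "hd (rev p) = y" using p(3) pne by (simp add: hd_rev)
    then obtain q2 where q2: "walk TE q2" "hd q2 = y" "last q2 = a0" "set q2 \<subseteq> set p \<inter> A"
      using cross[of TE A a0, OF cr wr] y False by auto
    have q2ne: "q2 \<noteq> []" using q2 walk_nonempty by blast
    have wr2: "walk TE (rev q2)" using walk_rev[OF q2(1)] .
    have h2: "hd (rev q2) = a0" using q2(3) q2ne by (simp add: hd_rev)
    have l2: "last (rev q2) = y" using q2(2) q2ne by (simp add: last_rev)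
    define r where "r = q1 @ tl (rev q2)"
    have "last q1 = hd (rev q2)" using q1(3) h2 by simp
    note j = walk_join[OF q1(1) wr2 this]
    have "set r \<subseteq> set q1 \<union> set q2" using j(4) unfolding r_def by simp
    then have sr: "set r \<subseteq> M \<inter> A" using q1(4) q2(4) p(4) by blast
    have "walk {e \<in> TE. e \<subseteq> N \<inter> A} r" using walk_restrict[OF j(1)[folded r_def], of "N \<inter> A"] sr MN by auto
    then show ?thesis using j(2,3) q1(2) l2 sr unfolding r_def by (intro exI[of _ "q1 @ tl (rev q2)"]) auto
  qed
qed

lemma shared:
  assumes c: "connected_on M TE" and ct: "cut TE A a0 b0" and a: "a \<in> M \<inter> A" and b: "b \<in> M - A"
  shows "a0 \<in> M" "b0 \<in> M"
proof -
  obtain p where p: "walk TE p" "hd p = a" "last p = b" "set p \<subseteq> M" using conn_walk[OF c] a b by blast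
  have pne: "p \<noteq> []" using p walk_nonempty by blast
  have cr: "\<forall>u v. {u, v} \<in> TE \<longrightarrow> u \<in> A \<longrightarrow> v \<notin> A \<longrightarrow> u = a0" using cut_cross[OF ct] by blast
  have "b \<in> set p" using p(3) pne by auto
  then have "\<not> set p \<subseteq> A" using b by auto
  then obtain q where q: "walk TE q" "last q = a0" "set q \<subseteq> set p \<inter> A"
    using cross[of TE A a0, OF cr p(1)] p(2) a by auto
  have "q \<noteq> []" using q walk_nonempty by blast
  then have "a0 \<in> set q" using q(2) by auto
  then show "a0 \<in> M" using q(3) p(4) by auto
  have cr2: "\<forall>u v. {u, v} \<in> TE \<longrightarrow> u \<in> - A \<longrightarrow> v \<notin> - A \<longrightarrow> u = b0" using cut_cross[OF cut_sym[OF ct]] by blast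
  have wr: "walk TE (rev p)" using walk_rev[OF p(1)] .
  have h: "hd (rev p) = b" using p(3) pne by (simp add: hd_rev)
  have "a \<in> set (rev p)" using p(2) pne by auto
  then have "\<not> set (rev p) \<subseteq> - A" using a by auto
  then obtain q' where q': "walk TE q'" "last q' = b0" "set q' \<subseteq> set (rev p) \<inter> - A"
    using cross[of TE "- A" b0, OF cr2 wr] h b by auto
  have "q' \<noteq> []" using q' walk_nonempty by blast
  then have "b0 \<in> set q'" using q'(2) by auto
  then show "b0 \<in> M" using q'(3) p(4) by auto
qed


lemma split_exists:
  assumes t: "is_tree N TE" and e: "{r, s} \<in> TE"
  shows "\<exists>A. cut TE A r s"
proof -
  have rs: "r \<in> N" "s \<in> N" "r \<noteq> s" using tree_edge[OF t e] by auto
  define TE' where "TE' = TE - {{r, s}}"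
  define A where "A = {x. \<exists>p. walk TE' p \<and> hd p = r \<and> last p = x \<and> set p \<subseteq> N}"
  have rA: "r \<in> A" unfolding A_def using rs by (intro CollectI exI[of _ "[r]"]) auto
  have ext: "y \<in> A" if x: "x \<in> A" and xy: "{x, y} \<in> TE" and ne: "{x, y} \<noteq> {r, s}" for x y
  proof -
    obtain p where p: "walk TE' p" "hd p = r" "last p = x" "set p \<subseteq> N" using x unfolding A_def by blast
    have pne: "p \<noteq> []" using p walk_nonempty by blast
    have "{last p, hd [y]} \<in> TE'" using xy ne p(3) unfolding TE'_def by simp
    then have w: "walk TE' (p @ [y])" using walk_append_iff[OF pne, of "[y]" TE'] p(1) by simp
    have "y \<in> N" using tree_edge[OF t xy] by simp
    then show ?thesis unfolding A_def using w p pne by (intro CollectI exI[of _ "p @ [y]"]) auto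
  qed
  have sA: "s \<notin> A"
  proof
    assume "s \<in> A"
    then obtain p where p: "walk TE' p" "hd p = r" "last p = s" "set p \<subseteq> N" unfolding A_def by blast
    obtain q where q: "walk TE' q" "distinct q" "hd q = r" "last q = s" "set q \<subseteq> set p"
      using walk_to_path[OF p(1)] p(2,3) by auto
    have len: "length q \<ge> 3"
    proof (cases q)
      case Nil then show ?thesis using q walk_nonempty by blast
    next
      case (Cons a q1)
      show ?thesis
      proof (cases q1)
        case Nil then show ?thesis using Cons q rs by simp
      next
        case (Cons b q2)
        show ?thesis
        proof (cases q2)
          case Nil
          then have "{r, s} \<in> TE'" using q Cons \<open>q = a # q1\<close> by simp
          then show ?thesis unfolding TE'_def by simp
        next
          case (Cons c' q3) then show ?thesis using \<open>q = a # q1\<close> \<open>q1 = b # q2\<close> by simp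
        qed
      qed
    qed
    have "walk TE q" using walk_mono[OF q(1)] unfolding TE'_def by blast
    moreover have "{last q, hd q} \<in> TE" using q(3,4) e by (simp add: insert_commute)
    ultimately have "has_cycle N TE" unfolding has_cycle_def using len q(2,5) p(4)
      by (intro exI[of _ q]) auto
    then show False using t unfolding is_tree_def by blast
  qed
  have "cut TE A r s"
    unfolding cut_def
  proof (intro conjI allI impI)
    fix x y assume xy: "{x, y} \<in> TE" and x: "x \<in> A" and y: "y \<notin> A"
    then have "{x, y} = {r, s}" using ext by blast
    then have "(x = r \<and> y = s) \<or> (x = s \<and> y = r)" by (auto simp: doubleton_eq_iff)
    then show "x = r" "y = s" using x sA by auto
  qed (use rA sA e in auto)
  then show ?thesis by blast
qed

lemma tree_part:
  assumes t: "is_tree N TE" and ct: "cut TE A a0 b0"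
  shows "is_tree (N \<inter> A) {e \<in> TE. e \<subseteq> N \<inter> A}"
proof -
  have ab: "a0 \<in> N" "a0 \<in> A" using ct tree_edge[OF t] unfolding cut_def by auto
  have fin: "finite (N \<inter> A)" using t unfolding is_tree_def by simp
  have ne: "N \<inter> A \<noteq> {}" using ab by blast
  have gr: "graph (N \<inter> A) {e \<in> TE. e \<subseteq> N \<inter> A}"
    unfolding graph_def
  proof
    fix e assume e: "e \<in> {e \<in> TE. e \<subseteq> N \<inter> A}"
    then obtain u v where "e = {u, v}" "u \<noteq> v" using t unfolding is_tree_def graph_def by blast
    then show "\<exists>u v. e = {u, v} \<and> u \<noteq> v \<and> u \<in> N \<inter> A \<and> v \<in> N \<inter> A" using e by blast
  qed
  have cN: "connected_on N TE" using t unfolding is_tree_def by simp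
  have co: "connected_on (N \<inter> A) {e \<in> TE. e \<subseteq> N \<inter> A}" using conn_part[OF cN ct] by simp
  have nc: "\<not> has_cycle (N \<inter> A) {e \<in> TE. e \<subseteq> N \<inter> A}"
  proof
    assume "has_cycle (N \<inter> A) {e \<in> TE. e \<subseteq> N \<inter> A}"
    then obtain p where p: "length p \<ge> 3" "distinct p" "set p \<subseteq> N \<inter> A" "walk {e \<in> TE. e \<subseteq> N \<inter> A} p"
      "{last p, hd p} \<in> {e \<in> TE. e \<subseteq> N \<inter> A}" unfolding has_cycle_def by blast
    have "walk TE p" using walk_mono[OF p(4)] by blast
    then have "has_cycle N TE" unfolding has_cycle_def using p by (intro exI[of _ p]) auto
    then show False using t unfolding is_tree_def by blast
  qed
  show ?thesis unfolding is_tree_def using fin ne gr co nc by blast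
qed

lemma tree_nbr:
  assumes t: "is_tree N TE" and r: "r \<in> N" and u: "u \<in> N" "u \<noteq> r"
  shows "\<exists>s. {r, s} \<in> TE"
proof -
  have cN: "connected_on N TE" using t unfolding is_tree_def by simp
  obtain p where p: "walk TE p" "hd p = r" "last p = u" using conn_walk[OF cN r u(1)] by blast
  obtain p' where pp: "p = r # p'" using p walk_nonempty by (cases p) auto
  have "p' \<noteq> []" using pp p(3) u(2) by auto
  then show ?thesis using p(1) pp walk_Cons[of TE r p'] by blast
qed

lemma ext_col_aux:
  assumes "finite Z" "finite Y"
  shows "Z \<inter> Y = {} \<Longrightarrow> card (Y \<union> Z) \<le> K \<Longrightarrow> inj_on c Y \<Longrightarrow> c ` Y \<subseteq> {1..K} \<Longrightarrow>
    \<exists>c'. inj_on c' (Y \<union> Z) \<and> c' ` (Y \<union> Z) \<subseteq> {1..K} \<and> (\<forall>v\<in>Y. c' v = c v)"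
  using assms(1)
proof (induction Z rule: finite_induct)
  case empty then show ?case by auto
next
  case (insert z Z)
  have fYZ: "finite (Y \<union> Z)" using insert.hyps(1) assms(2) by simp
  have zn: "z \<notin> Y \<union> Z" using insert.prems(1) insert.hyps(2) by auto
  have cardeq: "card (Y \<union> insert z Z) = Suc (card (Y \<union> Z))" using fYZ zn by simp
  then have "card (Y \<union> Z) \<le> K" using insert.prems(2) by simp
  then obtain c' where c': "inj_on c' (Y \<union> Z)" "c' ` (Y \<union> Z) \<subseteq> {1..K}" "\<forall>v\<in>Y. c' v = c v"
    using insert.IH insert.prems by auto
  have "card (c' ` (Y \<union> Z)) < K" using card_image[OF c'(1)] cardeq insert.prems(2) by simp
  note lt = this
  have "\<not> {1..K} \<subseteq> c' ` (Y \<union> Z)"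
  proof
    assume "{1..K} \<subseteq> c' ` (Y \<union> Z)"
    then have "card {1..K} \<le> card (c' ` (Y \<union> Z))" by (rule card_mono[OF finite_imageI[OF fYZ]])
    then show False using lt by simp
  qed
  then obtain col where col: "col \<in> {1..K}" "col \<notin> c' ` (Y \<union> Z)" by blast
  define c'' where "c'' = c'(z := col)"
  have eq: "\<forall>v\<in>Y \<union> Z. c'' v = c' v" unfolding c''_def using zn by auto
  have "inj_on c'' (Y \<union> Z) = inj_on c' (Y \<union> Z)" by (rule inj_on_cong) (use eq in simp)
  then have "inj_on c'' (Y \<union> Z)" using c'(1) by simp
  moreover have "c'' ` (Y \<union> Z) = c' ` (Y \<union> Z)" by (rule image_cong) (use eq in auto)
  then have "c'' z \<notin> c'' ` (Y \<union> Z)" using col unfolding c''_def by simp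
  ultimately have "inj_on c'' (insert z (Y \<union> Z))" using zn by simp
  moreover have "c'' ` (insert z (Y \<union> Z)) \<subseteq> {1..K}" using col c'(2) eq
    by (auto simp: c''_def)
  moreover have "\<forall>v\<in>Y. c'' v = c v" using c'(3) eq by auto
  ultimately show ?case by (intro exI[of _ c'']) auto
qed

lemma ext_col:
  assumes "finite X" "Y \<subseteq> X" "card X \<le> K" "inj_on c Y" "c ` Y \<subseteq> {1..K}"
  shows "\<exists>c'. inj_on c' X \<and> c' ` X \<subseteq> {1..K} \<and> (\<forall>v\<in>Y. c' v = c v)"
proof -
  have fY: "finite Y" using assms finite_subset by blast
  have eqX: "Y \<union> (X - Y) = X" using assms by blast
  have "\<exists>c'. inj_on c' (Y \<union> (X - Y)) \<and> c' ` (Y \<union> (X - Y)) \<subseteq> {1..K} \<and> (\<forall>v\<in>Y. c' v = c v)"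
    by (rule ext_col_aux) (use assms fY eqX in auto)
  then show ?thesis unfolding eqX .
qed


lemma split_setup:
  assumes t: "is_tree N TE" and r: "r \<in> N" and u: "u \<in> N" "u \<noteq> r"
  obtains s A where "{r, s} \<in> TE" "cut TE A r s" "cut TE (- A) s r" "s \<in> N"
    "is_tree (N \<inter> A) {e \<in> TE. e \<subseteq> N \<inter> A}" "is_tree (N \<inter> - A) {e \<in> TE. e \<subseteq> N \<inter> - A}"
    "card (N \<inter> A) < card N" "card (N \<inter> - A) < card N" "r \<in> N \<inter> A" "s \<in> N \<inter> - A"
proof -
  obtain s where e: "{r, s} \<in> TE" using tree_nbr[OF t r u] by blast
  obtain A where ct: "cut TE A r s" using split_exists[OF t e] by blast
  have ct2: "cut TE (- A) s r" using cut_sym[OF ct] .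
  have sN: "s \<in> N" using tree_edge[OF t e] by simp
  have rA: "r \<in> A" and sA: "s \<notin> A" using ct unfolding cut_def by auto
  have fin: "finite N" using t unfolding is_tree_def by simp
  have c1: "card (N \<inter> A) < card N" by (rule psubset_card_mono[OF fin]) (use sN sA in blast)
  have c2: "card (N \<inter> - A) < card N" by (rule psubset_card_mono[OF fin]) (use r rA in blast)
  show ?thesis
    by (rule that[OF e ct ct2 sN tree_part[OF t ct] tree_part[OF t ct2] c1 c2]) (use r rA sN sA in auto)
qed

lemma conn_sub:
  assumes "\<forall>v. connected_on {i \<in> N. v \<in> B i} TE" "cut TE A a0 b0"
  shows "\<forall>v. connected_on {i \<in> N \<inter> A. v \<in> B i} {e \<in> TE. e \<subseteq> N \<inter> A}"
proof
  fix v
  have "{i \<in> N. v \<in> B i} \<inter> A = {i \<in> N \<inter> A. v \<in> B i}" by blast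
  then show "connected_on {i \<in> N \<inter> A. v \<in> B i} {e \<in> TE. e \<subseteq> N \<inter> A}"
    using conn_part[OF assms(1)[rule_format, of v] assms(2), of N] by auto
qed

lemma shared_bags:
  assumes "\<forall>v. connected_on {i \<in> N. v \<in> B i} TE" "cut TE A a0 b0"
    and "a \<in> N \<inter> A" "v \<in> B a" "b \<in> N - A" "v \<in> B b"
  shows "v \<in> B a0" "v \<in> B b0"
proof -
  have c: "connected_on {i \<in> N. v \<in> B i} TE" using assms(1) by blast
  have "a \<in> {i \<in> N. v \<in> B i} \<inter> A" "b \<in> {i \<in> N. v \<in> B i} - A" using assms by auto
  note sh = shared[OF c assms(2) this]
  show "v \<in> B a0" "v \<in> B b0" using sh by auto
qed

lemma color:
  "is_tree (N :: nat set) TE \<Longrightarrow> r \<in> N \<Longrightarrow> (\<forall>i\<in>N. finite (B i) \<and> card (B i) \<le> K) \<Longrightarrow>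
   (\<forall>v. connected_on {i \<in> N. v \<in> B i} TE) \<Longrightarrow> inj_on c0 (B r) \<Longrightarrow> c0 ` B r \<subseteq> {1..K} \<Longrightarrow>
   \<exists>c. (\<forall>i\<in>N. inj_on c (B i) \<and> c ` B i \<subseteq> {1..K}) \<and> (\<forall>v\<in>B r. c v = c0 v)"
proof (induction "card N" arbitrary: N TE r c0 rule: less_induct)
  case less
  note t = less.prems(1) and r = less.prems(2) and bags = less.prems(3) and conn = less.prems(4)
    and inj0 = less.prems(5) and im0 = less.prems(6)
  show ?case
  proof (cases "\<exists>u\<in>N. u \<noteq> r")
    case False
    then have "\<forall>i\<in>N. i = r" by blast
    then show ?thesis using inj0 im0 by (intro exI[of _ c0]) auto
  next
    case True
    then obtain u where u: "u \<in> N" "u \<noteq> r" by blast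
    obtain s A where e: "{r, s} \<in> TE" and ct: "cut TE A r s" and ct2: "cut TE (- A) s r" and sN: "s \<in> N"
      and t1: "is_tree (N \<inter> A) {e \<in> TE. e \<subseteq> N \<inter> A}" and t2: "is_tree (N \<inter> - A) {e \<in> TE. e \<subseteq> N \<inter> - A}"
      and cd1: "card (N \<inter> A) < card N" and cd2: "card (N \<inter> - A) < card N"
      and r1: "r \<in> N \<inter> A" and s2: "s \<in> N \<inter> - A"
      by (rule split_setup[OF t r u])
    define U1 where "U1 = (\<Union>i\<in>N \<inter> A. B i)"
    have sh: "v \<in> B r \<and> v \<in> B s" if vU: "v \<in> U1" and bb: "b \<in> N \<inter> - A" "v \<in> B b" for v b
    proof -
      obtain a where "a \<in> N \<inter> A" "v \<in> B a" using vU unfolding U1_def by blast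
      then show ?thesis using shared_bags[OF conn ct, of a v b] bb by auto
    qed
    obtain c1 where c1: "\<forall>i\<in>N \<inter> A. inj_on c1 (B i) \<and> c1 ` B i \<subseteq> {1..K}" "\<forall>v\<in>B r. c1 v = c0 v"
    proof -
      have "\<forall>i\<in>N \<inter> A. finite (B i) \<and> card (B i) \<le> K" using bags by simp
      then show ?thesis using less.hyps[OF cd1 t1 r1 _ conn_sub[OF conn ct] inj0 im0] that by blast
    qed
    have fs: "finite (B s)" "card (B s) \<le> K" using bags sN by auto
    have "inj_on c1 (B s \<inter> B r)" "c1 ` (B s \<inter> B r) \<subseteq> {1..K}" using c1(1) r1
      by (auto intro: inj_on_subset)
    then obtain c0' where c0': "inj_on c0' (B s)" "c0' ` B s \<subseteq> {1..K}" "\<forall>v\<in>B s \<inter> B r. c0' v = c1 v"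
      using ext_col[OF fs(1) _ fs(2), of "B s \<inter> B r" c1] by auto
    obtain c2 where c2: "\<forall>i\<in>N \<inter> - A. inj_on c2 (B i) \<and> c2 ` B i \<subseteq> {1..K}" "\<forall>v\<in>B s. c2 v = c0' v"
    proof -
      have "\<forall>i\<in>N \<inter> - A. finite (B i) \<and> card (B i) \<le> K" using bags by simp
      then show ?thesis using less.hyps[OF cd2 t2 s2 _ conn_sub[OF conn ct2] c0'(1,2)] that by blast
    qed
    define c where "c = (\<lambda>v. if v \<in> U1 then c1 v else c2 v)"
    have on1: "c v = c1 v" if "i \<in> N \<inter> A" "v \<in> B i" for i v
      using that unfolding c_def U1_def by auto
    have on2: "c v = c2 v" if "i \<in> N \<inter> - A" "v \<in> B i" for i v
    proof (cases "v \<in> U1")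
      case True
      then have "v \<in> B r" "v \<in> B s" using sh that by auto
      then show ?thesis unfolding c_def using True c0'(3) c2(2) by auto
    next
      case False then show ?thesis unfolding c_def by simp
    qed
    have "inj_on c (B i) \<and> c ` B i \<subseteq> {1..K}" if i: "i \<in> N" for i
    proof (cases "i \<in> A")
      case True
      then have i1: "i \<in> N \<inter> A" using i by simp
      have "inj_on c (B i) = inj_on c1 (B i)" by (rule inj_on_cong) (use on1[OF i1] in simp)
      moreover have "c ` B i = c1 ` B i" by (rule image_cong) (use on1[OF i1] in simp_all)
      ultimately show ?thesis using c1(1) i1 by simp
    next
      case False
      then have i1: "i \<in> N \<inter> - A" using i by simp
      have "inj_on c (B i) = inj_on c2 (B i)" by (rule inj_on_cong) (use on2[OF i1] in simp)
      moreover have "c ` B i = c2 ` B i" by (rule image_cong) (use on2[OF i1] in simp_all)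
      ultimately show ?thesis using c2(1) i1 by simp
    qed
    moreover have "\<forall>v\<in>B r. c v = c0 v" using on1[OF r1] c1(2) by simp
    ultimately show ?thesis by blast
  qed
qed



context colgraph
begin

lemma buildable_add:
  assumes "buildable S" "x \<in> V" "x \<notin> S"
    "\<And>u y. u \<in> S \<Longrightarrow> y \<in> nbr E u - S \<Longrightarrow> y \<noteq> x \<Longrightarrow> c y \<noteq> c x"
  shows "good (insert x S)"
proof (cases "S = {}")
  case True then show ?thesis using good_single[OF assms(2)] by simp
next
  case False
  then have "good S" using assms(1) unfolding buildable_def by simp
  then show ?thesis using good_add assms by blast
qed

lemma buildable_union:
  assumes "buildable S1" "buildable S2" "S1 \<inter> S2 = {}"
    "\<And>u w. u \<in> S1 \<Longrightarrow> w \<in> S2 \<Longrightarrow> {u, w} \<notin> E"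
  shows "buildable (S1 \<union> S2)"
proof (cases "S1 = {}")
  case True then show ?thesis using assms(2) by simp
next
  case F1: False
  show ?thesis
  proof (cases "S2 = {}")
    case True then show ?thesis using assms(1) by simp
  next
    case False
    then show ?thesis using good_union[of S1 S2] assms F1 unfolding buildable_def by blast
  qed
qed

lemma addbag:
  assumes b0: "buildable S0" and fX: "finite X" and XW: "X \<subseteq> W" and WV: "W \<subseteq> V"
    and dis: "S0 \<inter> W = {}" and inj: "inj_on c W" and nb: "\<forall>u\<in>S0 \<union> X. nbr E u \<subseteq> S0 \<union> W"
  shows "buildable (S0 \<union> X)"
proof -
  have "buildable (S0 \<union> A)" if "finite A" "A \<subseteq> X" for A
    using that
  proof (induction A rule: finite_subset_induct')
    case empty then show ?case using b0 by simp
  next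
    case (insert a F)
    have aW: "a \<in> W" using insert.hyps XW by blast
    have "good (insert a (S0 \<union> F))"
    proof (rule buildable_add[OF insert.IH])
      show "a \<in> V" using aW WV by blast
      show "a \<notin> S0 \<union> F" using aW dis insert.hyps by blast
      fix u y assume u: "u \<in> S0 \<union> F" and y: "y \<in> nbr E u - (S0 \<union> F)" and yx: "y \<noteq> a"
      have "u \<in> S0 \<union> X" using u insert.hyps by blast
      then have "y \<in> S0 \<union> W" using nb y by blast
      then have "y \<in> W" using y by blast
      then show "c y \<noteq> c a" using inj aW yx inj_onD by metis
    qed
    then show ?case unfolding buildable_def by simp
  qed
  then show ?thesis using fX by blast
qed

lemma build:
  "is_tree (N :: nat set) TE \<Longrightarrow> r \<in> N \<Longrightarrow> (\<forall>i\<in>N. B i \<subseteq> V) \<Longrightarrow> (\<forall>i\<in>N. inj_on c (B i)) \<Longrightarrow>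
   (\<forall>v. connected_on {i \<in> N. v \<in> B i} TE) \<Longrightarrow>
   (\<forall>u\<in>(\<Union>i\<in>N. B i) - B r. nbr E u \<subseteq> (\<Union>i\<in>N. B i)) \<Longrightarrow>
   (\<forall>u w. {u, w} \<in> E \<longrightarrow> u \<in> (\<Union>i\<in>N. B i) \<longrightarrow> w \<in> (\<Union>i\<in>N. B i) \<longrightarrow> (\<exists>i\<in>N. u \<in> B i \<and> w \<in> B i)) \<Longrightarrow>
   buildable ((\<Union>i\<in>N. B i) - B r)"
proof (induction "card N" arbitrary: N TE r rule: less_induct)
  case less
  note t = less.prems(1) and r = less.prems(2) and BV = less.prems(3) and inj = less.prems(4)
    and conn = less.prems(5) and nbU = less.prems(6) and cov = less.prems(7)
  define U where "U = (\<Union>i\<in>N. B i)"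
  show ?case
  proof (cases "\<exists>u\<in>N. u \<noteq> r")
    case False
    then have "N = {r}" using r by blast
    then show ?thesis unfolding buildable_def by simp
  next
    case True
    then obtain u where u: "u \<in> N" "u \<noteq> r" by blast
    obtain s A where e: "{r, s} \<in> TE" and ct: "cut TE A r s" and ct2: "cut TE (- A) s r" and sN: "s \<in> N"
      and t1: "is_tree (N \<inter> A) {e \<in> TE. e \<subseteq> N \<inter> A}" and t2: "is_tree (N \<inter> - A) {e \<in> TE. e \<subseteq> N \<inter> - A}"
      and cd1: "card (N \<inter> A) < card N" and cd2: "card (N \<inter> - A) < card N"
      and r1: "r \<in> N \<inter> A" and s2: "s \<in> N \<inter> - A"
      by (rule split_setup[OF t r u])
    define U1 where "U1 = (\<Union>i\<in>N \<inter> A. B i)"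
    define U2 where "U2 = (\<Union>i\<in>N \<inter> - A. B i)"
    have UU: "U = U1 \<union> U2" unfolding U_def U1_def U2_def by blast
    have sh: "v \<in> B r \<and> v \<in> B s" if v1: "v \<in> U1" and v2: "v \<in> U2" for v
    proof -
      obtain a where a: "a \<in> N \<inter> A" "v \<in> B a" using v1 unfolding U1_def by blast
      obtain b where b: "b \<in> N \<inter> - A" "v \<in> B b" using v2 unfolding U2_def by blast
      show ?thesis using shared_bags[OF conn ct, of a v b] a b by auto
    qed
    have BrU1: "B r \<subseteq> U1" unfolding U1_def using r1 by blast
    have BsU2: "B s \<subseteq> U2" unfolding U2_def using s2 by blast
    have covU: "\<exists>i\<in>N. w \<in> B i \<and> y \<in> B i" if w: "w \<in> U - B r" and y: "y \<in> nbr E w" for w y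
    proof -
      have yU: "y \<in> U" using nbU w y unfolding U_def by blast
      have "{w, y} \<in> E" using y unfolding nbr_def by simp
      then show ?thesis using cov w yU unfolding U_def by blast
    qed
    have nbrU1: "nbr E w \<subseteq> U1" if w: "w \<in> U1 - B r" for w
    proof
      fix y assume y: "y \<in> nbr E w"
      have wU: "w \<in> U - B r" using w UU by blast
      obtain i where i: "i \<in> N" "w \<in> B i" "y \<in> B i" using covU[OF wU y] by blast
      show "y \<in> U1"
      proof (cases "i \<in> A")
        case True then show ?thesis using i unfolding U1_def by blast
      next
        case False
        then have "w \<in> U2" using i unfolding U2_def by blast
        then show ?thesis using sh w by blast
      qed
    qed
    have nbrU2: "nbr E w \<subseteq> U2" if w: "w \<in> U2 - B r" for w
    proof
      fix y assume y: "y \<in> nbr E w"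
      have wU: "w \<in> U - B r" using w UU by blast
      obtain i where i: "i \<in> N" "w \<in> B i" "y \<in> B i" using covU[OF wU y] by blast
      show "y \<in> U2"
      proof (cases "i \<in> A")
        case False then show ?thesis using i unfolding U2_def by blast
      next
        case True
        then have "w \<in> U1" using i unfolding U1_def by blast
        then show ?thesis using sh w by blast
      qed
    qed
    have b1: "buildable (U1 - B r)"
    proof -
      have h3: "\<forall>i\<in>N \<inter> A. B i \<subseteq> V" "\<forall>i\<in>N \<inter> A. inj_on c (B i)" using BV inj by auto
      have h6: "\<forall>w\<in>(\<Union>i\<in>N \<inter> A. B i) - B r. nbr E w \<subseteq> (\<Union>i\<in>N \<inter> A. B i)"
        using nbrU1 unfolding U1_def by blast
      have h7: "\<forall>w y. {w, y} \<in> E \<longrightarrow> w \<in> (\<Union>i\<in>N \<inter> A. B i) \<longrightarrow> y \<in> (\<Union>i\<in>N \<inter> A. B i) \<longrightarrow>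
          (\<exists>i\<in>N \<inter> A. w \<in> B i \<and> y \<in> B i)"
      proof (intro allI impI)
        fix w y assume wy: "{w, y} \<in> E" and w: "w \<in> (\<Union>i\<in>N \<inter> A. B i)" and y: "y \<in> (\<Union>i\<in>N \<inter> A. B i)"
        obtain i where i: "i \<in> N" "w \<in> B i" "y \<in> B i" using cov wy w y by blast
        show "\<exists>i\<in>N \<inter> A. w \<in> B i \<and> y \<in> B i"
        proof (cases "i \<in> A")
          case True then show ?thesis using i by blast
        next
          case False
          then have "w \<in> U2" "y \<in> U2" using i unfolding U2_def by auto
          then have "w \<in> B r" "y \<in> B r" using sh w y unfolding U1_def by auto
          then show ?thesis using r1 by blast
        qed
      qed
      show ?thesis using less.hyps[OF cd1 t1 r1 h3 conn_sub[OF conn ct] h6 h7] unfolding U1_def .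
    qed
    have b2: "buildable (U2 - B s)"
    proof -
      have h3: "\<forall>i\<in>N \<inter> - A. B i \<subseteq> V" "\<forall>i\<in>N \<inter> - A. inj_on c (B i)" using BV inj by auto
      have h6: "\<forall>w\<in>(\<Union>i\<in>N \<inter> - A. B i) - B s. nbr E w \<subseteq> (\<Union>i\<in>N \<inter> - A. B i)"
      proof
        fix w assume w: "w \<in> (\<Union>i\<in>N \<inter> - A. B i) - B s"
        then have "w \<notin> B r" using sh BrU1 unfolding U2_def by blast
        then have "w \<in> U2 - B r" using w unfolding U2_def by blast
        then show "nbr E w \<subseteq> (\<Union>i\<in>N \<inter> - A. B i)" using nbrU2 unfolding U2_def by blast
      qed
      have h7: "\<forall>w y. {w, y} \<in> E \<longrightarrow> w \<in> (\<Union>i\<in>N \<inter> - A. B i) \<longrightarrow> y \<in> (\<Union>i\<in>N \<inter> - A. B i) \<longrightarrow>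
          (\<exists>i\<in>N \<inter> - A. w \<in> B i \<and> y \<in> B i)"
      proof (intro allI impI)
        fix w y assume wy: "{w, y} \<in> E" and w: "w \<in> (\<Union>i\<in>N \<inter> - A. B i)" and y: "y \<in> (\<Union>i\<in>N \<inter> - A. B i)"
        obtain i where i: "i \<in> N" "w \<in> B i" "y \<in> B i" using cov wy w y by blast
        show "\<exists>i\<in>N \<inter> - A. w \<in> B i \<and> y \<in> B i"
        proof (cases "i \<in> A")
          case False then show ?thesis using i by blast
        next
          case True
          then have "w \<in> U1" "y \<in> U1" using i unfolding U1_def by auto
          then have "w \<in> B s" "y \<in> B s" using sh w y unfolding U2_def by auto
          then show ?thesis using s2 by blast
        qed
      qed
      show ?thesis using less.hyps[OF cd2 t2 s2 h3 conn_sub[OF conn ct2] h6 h7] unfolding U2_def .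
    qed
    have b2': "buildable (U2 - B r)"
    proof -
      have eq: "(U2 - B s) \<union> (B s - B r) = U2 - B r" using BsU2 sh BrU1 by blast
      have "buildable ((U2 - B s) \<union> (B s - B r))"
      proof (rule addbag[OF b2, of _ "B s"])
        show "finite (B s - B r)" using BV sN finV finite_subset by blast
        show "B s - B r \<subseteq> B s" by blast
        show "B s \<subseteq> V" using BV sN by blast
        show "(U2 - B s) \<inter> B s = {}" by blast
        show "inj_on c (B s)" using inj sN by blast
        have "U2 - B s \<union> B s = U2" using BsU2 by blast
        then show "\<forall>u\<in>U2 - B s \<union> (B s - B r). nbr E u \<subseteq> U2 - B s \<union> B s"
          using nbrU2 eq by auto
      qed
      then show ?thesis using eq by simp
    qed
    have "buildable ((U1 - B r) \<union> (U2 - B r))"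
    proof (rule buildable_union[OF b1 b2'])
      show "(U1 - B r) \<inter> (U2 - B r) = {}" using sh by blast
      fix w y assume w: "w \<in> U1 - B r" and y: "y \<in> U2 - B r"
      show "{w, y} \<notin> E"
      proof
        assume "{w, y} \<in> E"
        then have "y \<in> nbr E w" unfolding nbr_def by simp
        then have "y \<in> U1" using nbrU1 w by blast
        then show False using sh y by blast
      qed
    qed
    moreover have "(U1 - B r) \<union> (U2 - B r) = (\<Union>i\<in>N. B i) - B r" using UU unfolding U_def by blast
    ultimately show ?thesis by simp
  qed
qed

lemma final:
  assumes td: "tree_decomposition V E N TE B" and inj: "\<forall>i\<in>N. inj_on c (B i)" and Vne: "V \<noteq> {}"
  shows "\<exists>e. mexpr_ok (Suc K) e \<and> generates e V E"
proof -
  note td' = td[unfolded tree_decomposition_def]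
  have t: "is_tree N TE" using td' by (rule conjunct1)
  have BV: "\<forall>i\<in>N. B i \<subseteq> V" using td' by (elim conjE)
  have cvr: "\<forall>v\<in>V. \<exists>i\<in>N. v \<in> B i" using td' by (elim conjE)
  have ced: "\<forall>u v. {u, v} \<in> E \<longrightarrow> (\<exists>i\<in>N. u \<in> B i \<and> v \<in> B i)" using td' by (elim conjE)
  have cn: "\<forall>v\<in>V. connected_on {i \<in> N. v \<in> B i} TE" using td' by (elim conjE)
  obtain r where r: "r \<in> N" using t unfolding is_tree_def by blast
  have UV: "(\<Union>i\<in>N. B i) = V" using BV cvr by blast
  have conn: "\<forall>v. connected_on {i \<in> N. v \<in> B i} TE"
  proof
    fix v show "connected_on {i \<in> N. v \<in> B i} TE"
    proof (cases "v \<in> V")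
      case True then show ?thesis using cn by blast
    next
      case False
      then have emp: "{i \<in> N. v \<in> B i} = {}" using BV by blast
      show ?thesis unfolding emp connected_on_def by simp
    qed
  qed
  have nbU: "\<forall>u\<in>(\<Union>i\<in>N. B i) - B r. nbr E u \<subseteq> (\<Union>i\<in>N. B i)" unfolding UV using nbr_V by blast
  have cov: "\<forall>u w. {u, w} \<in> E \<longrightarrow> u \<in> (\<Union>i\<in>N. B i) \<longrightarrow> w \<in> (\<Union>i\<in>N. B i) \<longrightarrow> (\<exists>i\<in>N. u \<in> B i \<and> w \<in> B i)"
    using ced by blast
  have b: "buildable (V - B r)" using build[OF t r BV inj conn nbU cov] UV by simp
  have "buildable ((V - B r) \<union> B r)"
  proof (rule addbag[OF b])
    show "finite (B r)" using BV r finV finite_subset by blast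
    show "B r \<subseteq> B r" by simp
    show "B r \<subseteq> V" using BV r by blast
    show "(V - B r) \<inter> B r = {}" by blast
    show "inj_on c (B r)" using inj r by blast
    have "V - B r \<union> B r = V" using BV r by blast
    then show "\<forall>u\<in>V - B r \<union> B r. nbr E u \<subseteq> V - B r \<union> B r" using nbr_V by simp
  qed
  moreover have "(V - B r) \<union> B r = V" using BV r by blast
  ultimately have "good V" using Vne unfolding buildable_def by simp
  then obtain e where ok: "mexpr_ok (Suc K) e" and rp: "rep E c e V" unfolding good_def by blast
  obtain V0 E0 L0 where ev: "eval e = (V0, E0, L0)" by (cases "eval e")
  obtain f where f1: "bij_betw f V0 V" and f2: "\<And>u v. u \<in> V0 \<Longrightarrow> v \<in> V0 \<Longrightarrow> {u, v} \<in> E0 \<longleftrightarrow> {f u, f v} \<in> E"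
    and f3: "\<And>u. u \<in> V0 \<Longrightarrow> L0 u = c ` (nbr E (f u) - V)"
    using rep_E[OF rp ev] by blast
  have "generates e V E" unfolding generates_def ev prod.case
    using f1 f2 by (intro exI[of _ f]) simp
  then show ?thesis using ok by blast
qed

end

lemma graph_edge: "graph V E \<Longrightarrow> {u, v} \<in> E \<Longrightarrow> u \<in> V \<and> v \<in> V"
proof -
  assume g: "graph V E" and e: "{u, v} \<in> E"
  then obtain a b where "{u, v} = {a, b}" "a \<in> V" "b \<in> V" unfolding graph_def by blast
  then show ?thesis by (auto simp: doubleton_eq_iff)
qed

lemma conn_single: "S \<subseteq> {0::nat} \<Longrightarrow> connected_on S {}"
  unfolding connected_on_def
proof (intro ballI)
  fix x y assume "S \<subseteq> {0}" "x \<in> S" "y \<in> S"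
  then have "x = 0" "y = 0" by auto
  then show "\<exists>p. walk {} p \<and> hd p = x \<and> last p = y \<and> set p \<subseteq> S"
    using \<open>x \<in> S\<close> by (intro exI[of _ "[0]"]) auto
qed

lemma td_trivial:
  assumes g: "graph V E"
  shows "tree_decomposition V E {0} {} (\<lambda>_. V)"
proof -
  have nc: "\<not> has_cycle {0::nat} {}"
  proof
    assume "has_cycle {0::nat} {}"
    then obtain p :: "nat list" where p: "length p \<ge> 3" "distinct p" "set p \<subseteq> {0}" unfolding has_cycle_def by blast
    have "length p = card (set p)" using distinct_card[OF p(2)] by simp
    also have "\<dots> \<le> card {0::nat}" by (rule card_mono) (use p(3) in auto)
    finally show False using p(1) by simp
  qed
  have gr0: "graph {0::nat} {}" unfolding graph_def by simp
  have "is_tree {0::nat} {}" unfolding is_tree_def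
    using nc gr0 conn_single[of "{0}"] by simp
  moreover have "\<forall>u v. {u, v} \<in> E \<longrightarrow> (\<exists>i\<in>{0::nat}. u \<in> V \<and> v \<in> V)"
    using graph_edge[OF g] by simp
  moreover have "\<forall>v\<in>V. connected_on {i \<in> {0::nat}. v \<in> V} {}"
  proof
    fix v show "connected_on {i \<in> {0::nat}. v \<in> V} {}" by (rule conn_single) blast
  qed
  moreover have "\<forall>i\<in>{0::nat}. V \<subseteq> V" "\<forall>v\<in>V. \<exists>i\<in>{0::nat}. v \<in> V" by simp_all
  ultimately show ?thesis unfolding tree_decomposition_def by simp
qed

theorem mainTheorem5:
  fixes V :: "'a set" and E :: "'a set set"
  assumes "finite_graph V E" and "V \<noteq> {}"
  shows "mcw V E \<le> treewidth V E + 2"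
proof -
  have g: "graph V E" and fV: "finite V" using assms(1) unfolding finite_graph_def by auto
  define P where "P = (\<lambda>w. \<exists>N TE B. tree_decomposition V E N TE B \<and> decomposition_width N B = w)"
  have "P (decomposition_width {0} (\<lambda>_. V))" unfolding P_def using td_trivial[OF g] by blast
  then have "P (treewidth V E)" unfolding treewidth_def P_def[symmetric] by (rule LeastI)
  then obtain N TE B where td: "tree_decomposition V E N TE B" and wd: "decomposition_width N B = treewidth V E"
    unfolding P_def by blast
  define K where "K = treewidth V E + 1"
  note td' = td[unfolded tree_decomposition_def]
  have t: "is_tree N TE" using td' by (rule conjunct1)
  have BV: "\<forall>i\<in>N. B i \<subseteq> V" using td' by (elim conjE)
  have cvr: "\<forall>v\<in>V. \<exists>i\<in>N. v \<in> B i" using td' by (elim conjE)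
  have cn: "\<forall>v\<in>V. connected_on {i \<in> N. v \<in> B i} TE" using td' by (elim conjE)
  have fN: "finite N" using t unfolding is_tree_def by simp
  have bags: "\<forall>i\<in>N. finite (B i) \<and> card (B i) \<le> K"
  proof
    fix i assume i: "i \<in> N"
    have "card (B i) \<le> Max (card ` B ` N)" using fN i by (intro Max_ge) auto
    moreover have "Max (card ` B ` N) - 1 = treewidth V E" using wd unfolding decomposition_width_def .
    ultimately have "card (B i) \<le> K" unfolding K_def by linarith
    moreover have "finite (B i)" using BV i fV finite_subset by blast
    ultimately show "finite (B i) \<and> card (B i) \<le> K" by simp
  qed
  have conn: "\<forall>v. connected_on {i \<in> N. v \<in> B i} TE"
  proof
    fix v show "connected_on {i \<in> N. v \<in> B i} TE"
    proof (cases "v \<in> V")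
      case True then show ?thesis using cn by blast
    next
      case False
      then have emp: "{i \<in> N. v \<in> B i} = {}" using BV by blast
      show ?thesis unfolding emp connected_on_def by simp
    qed
  qed
  obtain r where r: "r \<in> N" using t unfolding is_tree_def by blast
  have fr: "finite (B r)" "card (B r) \<le> K" using bags r by auto
  obtain c0 where c0: "inj_on c0 (B r)" "c0 ` B r \<subseteq> {1..K}"
  proof -
    have "\<exists>c'. inj_on c' (B r) \<and> c' ` B r \<subseteq> {1..K} \<and> (\<forall>v\<in>{}. c' v = (\<lambda>_. 0::nat) v)"
      by (rule ext_col[OF fr(1) _ fr(2)]) simp_all
    then show ?thesis using that by blast
  qed
  have "\<exists>c. (\<forall>i\<in>N. inj_on c (B i) \<and> c ` B i \<subseteq> {1..K}) \<and> (\<forall>v\<in>B r. c v = c0 v)"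
    by (rule color[OF t r bags conn c0(1) c0(2)])
  then obtain c where c: "\<forall>i\<in>N. inj_on c (B i) \<and> c ` B i \<subseteq> {1..K}" by blast
  have col: "c y \<in> {1..K}" if yV: "y \<in> V" for y
  proof -
    obtain i where i: "i \<in> N" "y \<in> B i" using cvr yV by blast
    have "c ` B i \<subseteq> {1..K}" using c i(1) by blast
    moreover have "c y \<in> c ` B i" using i(2) by (rule imageI)
    ultimately show ?thesis by (rule subsetD)
  qed
  have cg: "colgraph V E c K" unfolding colgraph_def using g fV col by blast
  have injc: "\<forall>i\<in>N. inj_on c (B i)" using c by blast
  obtain e where "mexpr_ok (Suc K) e" "generates e V E" using colgraph.final[OF cg td injc assms(2)] by blast
  then have "mcw V E \<le> Suc K" unfolding mcw_def by (intro Least_le) blast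
  then show ?thesis unfolding K_def by simp
qed

end
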